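(* Let $X,Y$ be random variables with $\mathrm{Supp}(X)\subseteq\mathrm{Supp}(Y)=\{x_1,x_2,x_3\}$ (three distinct points). If $(X,Y)\in\mathrm{IC}$, then $X$ and $Y$ have the same distribution or $\mathrm{Corr}(X,Y)=0$.
   Context: $\mathrm{Supp}(X)=\{x:\mathbb P(x-\epsilon<X\le x+\epsilon)>0\ \forall\epsilon>0\}$. $\mathcal L^2$ is the set of non-degenerate real random variables with finite variance. $(X,Y)\in\mathrm{IC}_r$ means $X,Y\in\mathcal L^2$ and $\mathrm{Corr}(X,Y)=\mathrm{Corr}(g(X),g(Y))=r$ for every measurable $g$ with $g(X),g(Y)\in\mathcal L^2$; $\mathrm{IC}=\bigcup_{r\in[-1,1]}\mathrm{IC}_r$. *)

theory Defs
  imports "HOL-Probability.Probability"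
begin

definition supp :: "'a measure \<Rightarrow> ('a \<Rightarrow> real) \<Rightarrow> real set" where
  "supp M X = {x. \<forall>e>0. measure M {w \<in> space M. x - e < X w \<and> X w \<le> x + e} > 0}"

definition L2 :: "'a measure \<Rightarrow> ('a \<Rightarrow> real) \<Rightarrow> bool" where
  "L2 M X \<longleftrightarrow> X \<in> borel_measurable M \<and> integrable M X \<and> integrable M (\<lambda>w. (X w)\<^sup>2)
     \<and> \<not> (\<exists>c. AE w in M. X w = c)"

definition cov :: "'a measure \<Rightarrow> ('a \<Rightarrow> real) \<Rightarrow> ('a \<Rightarrow> real) \<Rightarrow> real" where
  "cov M X Y = (\<integral>w. (X w - (\<integral>v. X v \<partial>M)) * (Y w - (\<integral>v. Y v \<partial>M)) \<partial>M)"

definition corr :: "'a measure \<Rightarrow> ('a \<Rightarrow> real) \<Rightarrow> ('a \<Rightarrow> real) \<Rightarrow> real" where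
  "corr M X Y = cov M X Y / sqrt (cov M X X * cov M Y Y)"

definition IC_r :: "'a measure \<Rightarrow> real \<Rightarrow> ('a \<Rightarrow> real) \<Rightarrow> ('a \<Rightarrow> real) \<Rightarrow> bool" where
  "IC_r M r X Y \<longleftrightarrow> L2 M X \<and> L2 M Y \<and> corr M X Y = r \<and>
     (\<forall>g \<in> borel_measurable borel. L2 M (g \<circ> X) \<and> L2 M (g \<circ> Y) \<longrightarrow>
        corr M (g \<circ> X) (g \<circ> Y) = r)"

definition IC :: "'a measure \<Rightarrow> ('a \<Rightarrow> real) \<Rightarrow> ('a \<Rightarrow> real) \<Rightarrow> bool" where
  "IC M X Y \<longleftrightarrow> (\<exists>r\<in>{-1..1}. IC_r M r X Y)"

end

theory Submission
  imports Defs
begin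

lemma quartic0:
  fixes e0 e1 e2 e3 e4 :: real
  assumes "\<And>t. t \<in> {-2,-1,2,3,4} \<Longrightarrow> e0 + e1*t + e2*t^2 + e3*t^3 + e4*t^4 = 0"
  shows "e0 = 0 \<and> e1 = 0 \<and> e2 = 0 \<and> e3 = 0 \<and> e4 = 0"
proof -
  have "e0 + e1*(-2) + e2*4 + e3*(-8) + e4*16 = 0" using assms[of "-2"] by simp
  moreover have "e0 + e1*(-1) + e2 + e3*(-1) + e4 = 0" using assms[of "-1"] by simp
  moreover have "e0 + e1*2 + e2*4 + e3*8 + e4*16 = 0" using assms[of "2"] by simp
  moreover have "e0 + e1*3 + e2*9 + e3*27 + e4*81 = 0" using assms[of "3"] by simp
  moreover have "e0 + e1*4 + e2*16 + e3*64 + e4*256 = 0" using assms[of "4"] by simp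
  ultimately show ?thesis by linarith
qed

lemma expand: fixes t :: real shows "(c0+c1*t+c2*t^2)^2 - k * (a0+a1*t+a2*t^2) * (b0+b1*t+b2*t^2) = (c0^2 - k*a0*b0) + (2*c0*c1 - k*(a0*b1+a1*b0))*t +
     (c1^2+2*c0*c2 - k*(a0*b2+a1*b1+a2*b0))*t^2 + (2*c1*c2 - k*(a1*b2+a2*b1))*t^3
     + (c2^2 - k*a2*b2)*t^4"
  by algebra
lemma core_alg:
  fixes a0 a1 a2 b0 b1 b2 c0 c1 c2 k :: real
  assumes k: "k > 0" and b2: "b2 > 0" and disc: "b1^2 < 4*b0*b2"
    and E: "\<And>t. t \<in> {-2,-1,2,3,4} \<Longrightarrow>
       (c0+c1*t+c2*t^2)^2 = k * (a0+a1*t+a2*t^2) * (b0+b1*t+b2*t^2)"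
  shows "\<exists>l. a0 = l*b0 \<and> a1 = l*b1 \<and> a2 = l*b2"
proof -
  have Q: "(c0^2 - k*a0*b0) = 0 \<and> (2*c0*c1 - k*(a0*b1+a1*b0)) = 0 \<and>
     (c1^2+2*c0*c2 - k*(a0*b2+a1*b1+a2*b0)) = 0 \<and> (2*c1*c2 - k*(a1*b2+a2*b1)) = 0
     \<and> (c2^2 - k*a2*b2) = 0"
  proof (rule quartic0)
    fix t :: real assume "t \<in> {-2,-1,2,3,4}"
    from E[OF this] expand[of c0 c1 t c2 k a0 a1 a2 b0 b1 b2]
    show "(c0^2 - k*a0*b0) + (2*c0*c1 - k*(a0*b1+a1*b0))*t +
     (c1^2+2*c0*c2 - k*(a0*b2+a1*b1+a2*b0))*t^2 + (2*c1*c2 - k*(a1*b2+a2*b1))*t^3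
     + (c2^2 - k*a2*b2)*t^4 = 0" by simp
  qed
  then have q0: "c0^2 = k*a0*b0" and q1: "2*c0*c1 = k*(a0*b1+a1*b0)"
    and q2: "c1^2+2*c0*c2 = k*(a0*b2+a1*b1+a2*b0)" and q3: "2*c1*c2 = k*(a1*b2+a2*b1)"
    and q4: "c2^2 = k*a2*b2" by simp_all
  define m where "m = c2/b2"
  have c2: "c2 = m*b2" using b2 by (simp add: m_def)
  define r0 where "r0 = c0 - m*b0"
  define r1 where "r1 = c1 - m*b1"
  have c0: "c0 = m*b0 + r0" and c1: "c1 = m*b1+r1" by (simp_all add: r0_def r1_def)
  define sv0 where "sv0 = k*a0 - m^2*b0 - 2*m*r0"
  have "b2 * (k*a2) = b2 * (m^2*b2)" using q4 unfolding c2 by algebra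
  hence e4: "k*a2 = m^2*b2" using b2 by simp
  have "b2 * (k*a1) = b2 * (m^2*b1 + 2*m*r1)" using q3 e4 unfolding c2 c1 by algebra
  hence e3: "k*a1 = m^2*b1 + 2*m*r1" using b2 by simp
  have f2: "r1^2 = b2 * sv0" using q2 e3 e4 unfolding c2 c1 c0 sv0_def by algebra
  have f1: "2*r0*r1 = b1 * sv0" using q1 e3 unfolding c1 c0 sv0_def by algebra
  have f0: "r0^2 = b0 * sv0" using q0 unfolding c0 sv0_def by algebra
  have "sv0^2 * (4*b0*b2 - b1^2) = 0"
  proof -
    have "(2*r0*r1)^2 = 4 * r0^2 * r1^2" by algebra
    thus ?thesis using f0 f1 f2 by algebra
  qed
  hence "sv0 = 0" using disc by simp
  hence "r0 = 0" "r1 = 0" using f0 f2 by simp_all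
  hence "k*a0 = m^2*b0" "k*a1 = m^2*b1" "k*a2 = m^2*b2" using e3 e4 \<open>sv0=0\<close> unfolding sv0_def by simp_all
  hence "a0 = (m^2/k)*b0 \<and> a1 = (m^2/k)*b1 \<and> a2 = (m^2/k)*b2" using k by (simp add: field_simps)
  thus ?thesis by blast
qed


lemma pq_alg:
  fixes p1 p2 p3 q1 q2 q3 l :: real
  assumes "p1 \<ge> 0" "p2 \<ge> 0" "p3 \<ge> 0" "q1 > 0" "q2 > 0" "q3 > 0"
    "p1+p2+p3 = 1" "q1+q2+q3 = 1" "\<not> (p1*p2 = 0 \<and> p1*p3 = 0 \<and> p2*p3 = 0)"
    and h12: "p1*p2 = l*(q1*q2)" and h13: "p1*p3 = l*(q1*q3)" and h23: "p2*p3 = l*(q2*q3)"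
  shows "p1 = q1 \<and> p2 = q2 \<and> p3 = q3"
proof -
  have "l \<noteq> 0" using assms by auto
  have pos: "q1*q2 > 0" "q1*q3 > 0" "q2*q3 > 0" using assms by simp_all
  have "l \<ge> 0"
  proof (rule ccontr)
    assume "\<not> l \<ge> 0"
    hence "l*(q1*q2) < 0" "l*(q1*q3) < 0" "l*(q2*q3) < 0" using pos by (simp_all add: mult_neg_pos)
    moreover have "p1*p2 \<ge> 0" using assms(1,2) by (rule mult_nonneg_nonneg)
    ultimately show False using h12 by linarith
  qed
  have e1: "p1^2 = l*q1^2"
  proof -
    have "p1^2 * (l*(q2*q3)) = (p1*p2)*(p1*p3)" using h23 by (simp add: power2_eq_square)
    also have "\<dots> = (l*q1^2) * (l*(q2*q3))" using h12 h13 by (simp add: power2_eq_square)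
    finally show ?thesis using \<open>l \<noteq> 0\<close> assms(4-6) by auto
  qed
  have e2: "p2^2 = l*q2^2"
  proof -
    have "p2^2 * (l*(q1*q3)) = (p1*p2)*(p2*p3)" using h13 by (simp add: power2_eq_square)
    also have "\<dots> = (l*q2^2) * (l*(q1*q3))" using h12 h23 by (simp add: power2_eq_square)
    finally show ?thesis using \<open>l \<noteq> 0\<close> assms(4-6) by auto
  qed
  have e3: "p3^2 = l*q3^2"
  proof -
    have "p3^2 * (l*(q1*q2)) = (p1*p3)*(p2*p3)" using h12 by (simp add: power2_eq_square)
    also have "\<dots> = (l*q3^2) * (l*(q1*q2))" using h13 h23 by (simp add: power2_eq_square)
    finally show ?thesis using \<open>l \<noteq> 0\<close> assms(4-6) by auto
  qed
  define s where "s = sqrt l"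
  have sl: "s^2 = l" "s \<ge> 0" using \<open>l \<ge> 0\<close> by (simp_all add: s_def)
  have sq: "aa = s*bb" if "aa \<ge> 0" "bb > 0" "aa^2 = l*bb^2" for aa bb :: real
  proof -
    have "aa^2 = (s*bb)^2" using that sl by (simp add: power_mult_distrib)
    moreover have "s*bb \<ge> 0" using sl that by simp
    ultimately show ?thesis using that(1) power2_eq_iff_nonneg by blast
  qed
  have "p1 = s*q1" using sq e1 assms by simp
  moreover have "p2 = s*q2" using sq e2 assms by simp
  moreover have "p3 = s*q3" using sq e3 assms by simp
  ultimately have "s*(q1+q2+q3) = 1" using assms(7) by (simp add: algebra_simps)
  hence "s = 1" using assms(8) by simp
  thus ?thesis using \<open>p1 = s*q1\<close> \<open>p2 = s*q2\<close> \<open>p3 = s*q3\<close> by simp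
qed

lemma AE_supp:
  assumes "prob_space M" and Z: "Z \<in> borel_measurable M"
  shows "AE w in M. Z w \<in> supp M Z"
proof -
  interpret prob_space M by fact
  define F where "F = {U. open U \<and> Z -` U \<inter> space M \<in> null_sets M}"
  have cov: "x \<in> \<Union>F" if "x \<notin> supp M Z" for x
  proof -
    from that obtain e where e: "e > 0" and m: "\<not> measure M {w \<in> space M. x - e < Z w \<and> Z w \<le> x + e} > 0"
      unfolding supp_def by auto
    let ?S = "{w \<in> space M. x - e < Z w \<and> Z w \<le> x + e}"
    have Ssets: "?S \<in> sets M" using Z by measurable
    have "measure M ?S = 0" using m measure_nonneg[of M ?S] by linarith
    hence "?S \<in> null_sets M" using Ssets by (simp add: emeasure_eq_measure null_sets_def)
    moreover have "Z -` {x-e<..<x+e} \<inter> space M \<in> sets M" using Z by measurable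
    moreover have "Z -` {x-e<..<x+e} \<inter> space M \<subseteq> ?S" by auto
    ultimately have "Z -` {x-e<..<x+e} \<inter> space M \<in> null_sets M" using null_sets_subset by blast
    hence "{x-e<..<x+e} \<in> F" unfolding F_def by auto
    moreover have "x \<in> {x-e<..<x+e}" using e by auto
    ultimately show ?thesis by blast
  qed
  have "\<And>S. S \<in> F \<Longrightarrow> open S" unfolding F_def by auto
  then obtain F' where F': "F' \<subseteq> F" "countable F'" "\<Union>F' = \<Union>F" by (rule Lindelof)
  have "AE w in M. \<forall>U\<in>F'. w \<notin> Z -` U \<inter> space M"
    using F' by (intro AE_ball_countable' AE_not_in) (auto simp: F_def)
  then show ?thesis
  proof (rule AE_mp, intro AE_I2 impI)
    fix w assume w: "w \<in> space M" and h: "\<forall>U\<in>F'. w \<notin> Z -` U \<inter> space M"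
    show "Z w \<in> supp M Z"
    proof (rule ccontr)
      assume "Z w \<notin> supp M Z"
      hence "Z w \<in> \<Union>F'" using cov F' by auto
      thus False using h w by auto
    qed
  qed
qed

lemma supp_point_pos:
  assumes "prob_space M" and Z: "Z \<in> borel_measurable M" and fin: "finite S"
    and AE: "AE w in M. Z w \<in> S" and x: "x \<in> supp M Z"
  shows "measure M {w \<in> space M. Z w = x} > 0"
proof -
  interpret prob_space M by fact
  obtain d where d: "d > 0" "\<forall>y\<in>S. y \<noteq> x \<longrightarrow> d \<le> dist x y"
    using finite_set_avoid[OF fin, of x] by blast
  define e where "e = d/2"
  have e: "e > 0" using d by (simp add: e_def)
  have s1: "{w \<in> space M. x - e < Z w \<and> Z w \<le> x + e} \<in> sets M" using Z by measurable
  have s2: "{w \<in> space M. Z w = x} \<in> sets M" using Z by measurable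
  have "measure M {w \<in> space M. x - e < Z w \<and> Z w \<le> x + e} > 0" using x e unfolding supp_def by blast
  moreover have "measure M {w \<in> space M. x - e < Z w \<and> Z w \<le> x + e} = measure M {w \<in> space M. Z w = x}"
  proof (rule measure_eq_AE[OF _ s1 s2])
    show "AE w in M. (w \<in> {w \<in> space M. x - e < Z w \<and> Z w \<le> x + e}) = (w \<in> {w \<in> space M. Z w = x})"
      using AE
    proof (rule AE_mp, intro AE_I2 impI)
      fix w assume w: "w \<in> space M" and zs: "Z w \<in> S"
      have "Z w = x" if "x - e < Z w" "Z w \<le> x + e"
      proof (rule ccontr)
        assume "Z w \<noteq> x"
        hence "d \<le> dist x (Z w)" using d zs by auto
        thus False using that e_def d by (auto simp: dist_real_def)
      qed
      then show "(w \<in> {w \<in> space M. x - e < Z w \<and> Z w \<le> x + e}) = (w \<in> {w \<in> space M. Z w = x})"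
        using e w by auto
    qed
  qed
  ultimately show ?thesis by simp
qed

lemma cov_expand:
  assumes "prob_space M" and mU: "U \<in> borel_measurable M" and mV: "V \<in> borel_measurable M"
    and bU: "\<And>w. w \<in> space M \<Longrightarrow> \<bar>U w\<bar> \<le> cU" and bV: "\<And>w. w \<in> space M \<Longrightarrow> \<bar>V w\<bar> \<le> cV"
  shows "cov M U V = (\<integral>w. U w * V w \<partial>M) - (\<integral>w. U w \<partial>M) * (\<integral>w. V w \<partial>M)"
proof -
  interpret prob_space M by fact
  have iU: "integrable M U" by (rule integrable_const_bound[where B=cU]) (use mU bU in auto)
  have iV: "integrable M V" by (rule integrable_const_bound[where B=cV]) (use mV bV in auto)
  have iUV: "integrable M (\<lambda>w. U w * V w)"
  proof (rule integrable_const_bound[where B="cU*cV"])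
    show "AE w in M. norm (U w * V w) \<le> cU * cV"
    proof (intro AE_I2)
      fix w assume w: "w \<in> space M"
      have "\<bar>U w\<bar> * \<bar>V w\<bar> \<le> cU * cV"
        using bU[OF w] bV[OF w] by (intro mult_mono) (auto intro: order_trans[OF abs_ge_zero])
      thus "norm (U w * V w) \<le> cU * cV" by (simp add: abs_mult)
    qed
  qed (use mU mV in measurable)
  define a where "a = (\<integral>w. U w \<partial>M)"
  define b where "b = (\<integral>w. V w \<partial>M)"
  have "cov M U V = (\<integral>w. (U w * V w - b * U w) - (a * V w - a*b) \<partial>M)"
    unfolding cov_def a_def[symmetric] b_def[symmetric] by (rule Bochner_Integration.integral_cong) (auto simp: algebra_simps)
  also have "\<dots> = (\<integral>w. U w * V w \<partial>M) - b * a - (a * b - a * b)"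
    using iU iV iUV by (simp add: a_def b_def prob_space)
  finally show ?thesis by (simp add: a_def b_def)
qed

lemma int_ind2:
  assumes "prob_space M" "A1 \<in> sets M" "A2 \<in> sets M"
  shows "integrable M (\<lambda>w. a1 * indicator A1 w + a2 * indicator A2 w :: real)"
    and "(\<integral>w. a1 * indicator A1 w + a2 * indicator A2 w \<partial>M) = a1 * measure M A1 + a2 * measure M A2"
proof -
  interpret prob_space M by fact
  have i1: "integrable M (\<lambda>w. a1 * indicator A1 w :: real)" and i2: "integrable M (\<lambda>w. a2 * indicator A2 w :: real)"
    using assms by (auto intro!: integrable_mult_right integrable_real_indicator simp: less_top[symmetric])
  show "integrable M (\<lambda>w. a1 * indicator A1 w + a2 * indicator A2 w :: real)" using i1 i2 by simp
  show "(\<integral>w. a1 * indicator A1 w + a2 * indicator A2 w \<partial>M) = a1 * measure M A1 + a2 * measure M A2"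
    using i1 i2 assms by (simp add: integral_indicator sets.Int_space_eq2)
qed

lemma ring4: fixes a1 a2 b1 b2 m11 m12 m21 m22 pa1 pa2 pb1 pb2 :: real
  shows "(a1*b1 * m11 + a1*b2 * m12 + a2*b1 * m21 + a2*b2 * m22) - (a1 * pa1 + a2 * pa2) * (b1 * pb1 + b2 * pb2)
   = a1*b1*(m11 - pa1 * pb1) + a1*b2*(m12 - pa1*pb2) + a2*b1*(m21 - pa2*pb1) + a2*b2*(m22 - pa2*pb2)"
  by (simp add: algebra_simps)

lemma ring_prod: fixes a1 a2 b1 b2 x1 x2 y1 y2 :: real
  shows "(a1*x1 + a2*x2)*(b1*y1 + b2*y2) = (a1*b1*(x1*y1) + a1*b2*(x1*y2)) + (a2*b1*(x2*y1) + a2*b2*(x2*y2))"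
  by (simp add: algebra_simps)

lemma cov2:
  assumes P: "prob_space M" and s: "A1 \<in> sets M" "A2 \<in> sets M" "B1 \<in> sets M" "B2 \<in> sets M"
    and mU: "U \<in> borel_measurable M" and mV: "V \<in> borel_measurable M"
    and U: "\<And>w. w \<in> space M \<Longrightarrow> U w = a1 * indicator A1 w + a2 * indicator A2 w"
    and V: "\<And>w. w \<in> space M \<Longrightarrow> V w = b1 * indicator B1 w + b2 * indicator B2 w"
  shows "cov M U V = a1*b1*(measure M (A1\<inter>B1) - measure M A1 * measure M B1)
     + a1*b2*(measure M (A1\<inter>B2) - measure M A1 * measure M B2)
     + a2*b1*(measure M (A2\<inter>B1) - measure M A2 * measure M B1)
     + a2*b2*(measure M (A2\<inter>B2) - measure M A2 * measure M B2)"
proof -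
  interpret prob_space M by fact
  have bU: "\<bar>U w\<bar> \<le> \<bar>a1\<bar> + \<bar>a2\<bar>" if "w \<in> space M" for w
    using U[OF that] by (auto simp: indicator_def)
  have bV: "\<bar>V w\<bar> \<le> \<bar>b1\<bar> + \<bar>b2\<bar>" if "w \<in> space M" for w
    using V[OF that] by (auto simp: indicator_def)
  have EU: "(\<integral>w. U w \<partial>M) = a1 * measure M A1 + a2 * measure M A2"
  proof -
    have "(\<integral>w. U w \<partial>M) = (\<integral>w. a1 * indicator A1 w + a2 * indicator A2 w \<partial>M)"
      by (rule Bochner_Integration.integral_cong) (simp_all add: U)
    thus ?thesis by (simp only: int_ind2(2)[OF P s(1,2)])
  qed
  have EV: "(\<integral>w. V w \<partial>M) = b1 * measure M B1 + b2 * measure M B2"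
  proof -
    have "(\<integral>w. V w \<partial>M) = (\<integral>w. b1 * indicator B1 w + b2 * indicator B2 w \<partial>M)"
      by (rule Bochner_Integration.integral_cong) (simp_all add: V)
    thus ?thesis by (simp only: int_ind2(2)[OF P s(3,4)])
  qed
  have s2: "A1\<inter>B1 \<in> sets M" "A1\<inter>B2 \<in> sets M" "A2\<inter>B1 \<in> sets M" "A2\<inter>B2 \<in> sets M"
    using s by auto
  have "(\<integral>w. U w * V w \<partial>M) = (\<integral>w. (a1*b1 * indicator (A1\<inter>B1) w + a1*b2 * indicator (A1\<inter>B2) w)
       + (a2*b1 * indicator (A2\<inter>B1) w + a2*b2 * indicator (A2\<inter>B2) w) \<partial>M)"
  proof (rule Bochner_Integration.integral_cong)
    fix w assume w: "w \<in> space M"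
    show "U w * V w = (a1*b1 * indicator (A1\<inter>B1) w + a1*b2 * indicator (A1\<inter>B2) w)
       + (a2*b1 * indicator (A2\<inter>B1) w + a2*b2 * indicator (A2\<inter>B2) w)"
      unfolding U[OF w] V[OF w] indicator_inter_arith by (rule ring_prod)
  qed simp
  also have "\<dots> = (a1*b1 * measure M (A1\<inter>B1) + a1*b2 * measure M (A1\<inter>B2))
      + (a2*b1 * measure M (A2\<inter>B1) + a2*b2 * measure M (A2\<inter>B2))"
    by (simp only: Bochner_Integration.integral_add[OF int_ind2(1)[OF P s2(1,2)] int_ind2(1)[OF P s2(3,4)]]
        int_ind2(2)[OF P s2(1,2)] int_ind2(2)[OF P s2(3,4)])
  finally have EUV: "(\<integral>w. U w * V w \<partial>M) = a1*b1 * measure M (A1\<inter>B1) + a1*b2 * measure M (A1\<inter>B2)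
      + a2*b1 * measure M (A2\<inter>B1) + a2*b2 * measure M (A2\<inter>B2)" by (simp only: add.assoc)
  have "cov M U V = (\<integral>w. U w * V w \<partial>M) - (\<integral>w. U w \<partial>M) * (\<integral>w. V w \<partial>M)"
    by (rule cov_expand[OF P mU mV bU bV])
  also have "\<dots> = (a1*b1 * measure M (A1\<inter>B1) + a1*b2 * measure M (A1\<inter>B2)
      + a2*b1 * measure M (A2\<inter>B1) + a2*b2 * measure M (A2\<inter>B2)) - (a1 * measure M A1 + a2 * measure M A2) * (b1 * measure M B1 + b2 * measure M B2)"
    by (simp only: EU EV EUV)
  also have "\<dots> = a1*b1*(measure M (A1\<inter>B1) - measure M A1 * measure M B1)
     + a1*b2*(measure M (A1\<inter>B2) - measure M A1 * measure M B2)
     + a2*b1*(measure M (A2\<inter>B1) - measure M A2 * measure M B1)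
     + a2*b2*(measure M (A2\<inter>B2) - measure M A2 * measure M B2)" by (rule ring4)
  finally show ?thesis .
qed

lemma L2_bounded:
  assumes P: "prob_space M" and mU: "U \<in> borel_measurable M"
    and bU: "\<And>w. w \<in> space M \<Longrightarrow> \<bar>U w\<bar> \<le> c" and pos: "cov M U U > 0"
  shows "L2 M U"
proof -
  interpret prob_space M by fact
  have iU: "integrable M U" by (rule integrable_const_bound[where B=c]) (use mU bU in auto)
  have iU2: "integrable M (\<lambda>w. (U w)\<^sup>2)"
  proof (rule integrable_const_bound[where B="c^2"])
    show "AE w in M. norm ((U w)\<^sup>2) \<le> c^2"
    proof (intro AE_I2)
      fix w assume w: "w \<in> space M"
      have "\<bar>U w\<bar>^2 \<le> c^2" using bU[OF w] by (intro power_mono) auto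
      thus "norm ((U w)\<^sup>2) \<le> c^2" by simp
    qed
  qed (use mU in measurable)
  have nd: "\<not> (\<exists>k. AE w in M. U w = k)"
  proof
    assume "\<exists>k. AE w in M. U w = k"
    then obtain k where k: "AE w in M. U w = k" by blast
    have "(\<integral>w. U w \<partial>M) = (\<integral>w. k \<partial>M)" using k mU by (intro integral_cong_AE) auto
    hence Ek: "(\<integral>w. U w \<partial>M) = k" by (simp add: prob_space)
    have "cov M U U = (\<integral>w. 0 \<partial>M)" unfolding cov_def Ek
      using k mU by (intro integral_cong_AE) auto
    thus False using pos by simp
  qed
  show ?thesis unfolding L2_def using mU iU iU2 nd by blast
qed

lemma distr_fin:
  fixes Z :: "'a \<Rightarrow> real" and S :: "real set"
  assumes P: "prob_space M" and Z: "Z \<in> borel_measurable M" and fin: "finite S"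
    and AE: "AE w in M. Z w \<in> S" and A: "A \<in> sets borel"
  shows "emeasure (distr M borel Z) A = (\<Sum>x\<in>A\<inter>S. ennreal (measure M {w \<in> space M. Z w = x}))"
proof -
  interpret prob_space M by fact
  let ?D = "distr M borel Z"
  have Sb: "S \<in> sets borel" using borel_closed[OF finite_imp_closed[OF fin]] .
  have AED: "AE x in ?D. x \<in> S"
  proof -
    have "{x \<in> space borel. x \<in> S} \<in> sets borel" using Sb by simp
    from AE_distr_iff[OF Z this] show ?thesis using AE by simp
  qed
  have "emeasure ?D A = emeasure ?D (A \<inter> S)"
  proof (rule emeasure_eq_AE)
    show "AE x in ?D. (x \<in> A) = (x \<in> A \<inter> S)" using AED by (rule AE_mp) (intro AE_I2, blast)
  qed (use A Sb in simp_all)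
  also have "\<dots> = (\<Sum>x\<in>A\<inter>S. emeasure ?D {x})"
    by (rule emeasure_eq_sum_singleton) (use fin in simp_all)
  also have "\<dots> = (\<Sum>x\<in>A\<inter>S. ennreal (measure M {w \<in> space M. Z w = x}))"
  proof (rule sum.cong)
    fix x assume "x \<in> A \<inter> S"
    have "emeasure ?D {x} = emeasure M (Z -` {x} \<inter> space M)" using Z by (simp add: emeasure_distr)
    also have "Z -` {x} \<inter> space M = {w \<in> space M. Z w = x}" by blast
    also have "emeasure M {w \<in> space M. Z w = x} = ennreal (measure M {w \<in> space M. Z w = x})"
      by (simp add: emeasure_eq_measure)
    finally show "emeasure ?D {x} = ennreal (measure M {w \<in> space M. Z w = x})" .
  qed simp
  finally show ?thesis .
qed

lemma sum3:
  fixes Z :: "'a \<Rightarrow> real"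
  assumes P: "prob_space M" and Z: "Z \<in> borel_measurable M"
    and AE: "AE w in M. Z w \<in> {a, b, c}" and d: "a \<noteq> b" "a \<noteq> c" "b \<noteq> c"
  shows "measure M {w \<in> space M. Z w = a} + measure M {w \<in> space M. Z w = b}
       + measure M {w \<in> space M. Z w = c} = 1"
proof -
  interpret prob_space M by fact
  have sa: "{w \<in> space M. Z w = a} \<in> sets M" and sb: "{w \<in> space M. Z w = b} \<in> sets M"
    and sc: "{w \<in> space M. Z w = c} \<in> sets M" using Z by measurable
  have "measure M ({w \<in> space M. Z w = a} \<union> {w \<in> space M. Z w = b} \<union> {w \<in> space M. Z w = c})
      = measure M ({w \<in> space M. Z w = a} \<union> {w \<in> space M. Z w = b}) + measure M {w \<in> space M. Z w = c}"
    by (rule finite_measure_Union) (use sa sb sc d in auto)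
  also have "measure M ({w \<in> space M. Z w = a} \<union> {w \<in> space M. Z w = b})
      = measure M {w \<in> space M. Z w = a} + measure M {w \<in> space M. Z w = b}"
    by (rule finite_measure_Union) (use sa sb d in auto)
  finally have eq: "measure M ({w \<in> space M. Z w = a} \<union> {w \<in> space M. Z w = b} \<union> {w \<in> space M. Z w = c})
     = measure M {w \<in> space M. Z w = a} + measure M {w \<in> space M. Z w = b} + measure M {w \<in> space M. Z w = c}" .
  have "{w \<in> space M. Z w = a} \<union> {w \<in> space M. Z w = b} \<union> {w \<in> space M. Z w = c}
      = {w \<in> space M. Z w \<in> {a, b, c}}" by auto
  moreover have "measure M {w \<in> space M. Z w \<in> {a, b, c}} = 1"
  proof -
    have "{w \<in> space M. Z w \<in> {a, b, c}} \<in> sets M" using Z by measurable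
    thus ?thesis using prob_Collect_eq_1[of "\<lambda>w. Z w \<in> {a,b,c}"] AE by simp
  qed
  ultimately show ?thesis using eq by simp
qed

lemma prob1_AE:
  fixes Z :: "'a \<Rightarrow> real"
  assumes P: "prob_space M" and Z: "Z \<in> borel_measurable M"
    and h: "measure M {w \<in> space M. Z w = a} = 1"
  shows "AE w in M. Z w = a"
proof -
  interpret prob_space M by fact
  have "{w \<in> space M. Z w = a} \<in> sets M" using Z by measurable
  thus ?thesis using prob_Collect_eq_1[of "\<lambda>w. Z w = a"] h by simp
qed



theorem lemma4:
  fixes M :: "'a measure" and X Y :: "'a \<Rightarrow> real" and x1 x2 x3 :: real
  assumes "prob_space M"
    and "X \<in> borel_measurable M" and "Y \<in> borel_measurable M"
    and "x1 \<noteq> x2" and "x1 \<noteq> x3" and "x2 \<noteq> x3"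
    and "supp M Y = {x1, x2, x3}"
    and "supp M X \<subseteq> supp M Y"
    and "IC M X Y"
  shows "distr M borel X = distr M borel Y \<or> corr M X Y = 0"
proof (rule disjCI)
  note P = assms(1) and mX = assms(2) and mY = assms(3)
  interpret prob_space M by fact
  assume nz: "corr M X Y \<noteq> 0"
  from assms(9) obtain r where ICr: "IC_r M r X Y" unfolding IC_def by blast
  hence L2X: "L2 M X" and cXY: "corr M X Y = r"
    and G: "\<And>g. g \<in> borel_measurable borel \<Longrightarrow> L2 M (g \<circ> X) \<Longrightarrow> L2 M (g \<circ> Y) \<Longrightarrow>
              corr M (g \<circ> X) (g \<circ> Y) = r"
    unfolding IC_r_def by auto
  have r: "r \<noteq> 0" using nz cXY by simp
  define S where "S = {x1, x2, x3}"
  have finS: "finite S" by (simp add: S_def)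
  have AEY: "AE w in M. Y w \<in> S" using AE_supp[OF P mY] assms(7) by (simp add: S_def)
  have "AE w in M. X w \<in> supp M X" by (rule AE_supp[OF P mX])
  then have AEX: "AE w in M. X w \<in> S" by eventually_elim (use assms(7,8) S_def in auto)
  define A1 where "A1 = {w \<in> space M. X w = x1}"
  define A2 where "A2 = {w \<in> space M. X w = x2}"
  define A3 where "A3 = {w \<in> space M. X w = x3}"
  define B1 where "B1 = {w \<in> space M. Y w = x1}"
  define B2 where "B2 = {w \<in> space M. Y w = x2}"
  define B3 where "B3 = {w \<in> space M. Y w = x3}"
  have sA: "A1 \<in> sets M" "A2 \<in> sets M" "A3 \<in> sets M" unfolding A1_def A2_def A3_def using mX by measurable
  have sB: "B1 \<in> sets M" "B2 \<in> sets M" "B3 \<in> sets M" unfolding B1_def B2_def B3_def using mY by measurable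
  define p1 where "p1 = measure M A1"
  define p2 where "p2 = measure M A2"
  define p3 where "p3 = measure M A3"
  define q1 where "q1 = measure M B1"
  define q2 where "q2 = measure M B2"
  define q3 where "q3 = measure M B3"
  have pnn: "p1 \<ge> 0" "p2 \<ge> 0" "p3 \<ge> 0" unfolding p1_def p2_def p3_def by simp_all
  have qpos: "q1 > 0" "q2 > 0" "q3 > 0"
    unfolding q1_def q2_def q3_def B1_def B2_def B3_def
    using supp_point_pos[OF P mY finS AEY] assms(7) by auto
  have psum: "p1 + p2 + p3 = 1" unfolding p1_def p2_def p3_def A1_def A2_def A3_def
    using sum3[OF P mX _ assms(4-6)] AEX by (simp add: S_def)
  have qsum: "q1 + q2 + q3 = 1" unfolding q1_def q2_def q3_def B1_def B2_def B3_def
    using sum3[OF P mY _ assms(4-6)] AEY by (simp add: S_def)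
  have nd: "\<not> (p1*p2 = 0 \<and> p1*p3 = 0 \<and> p2*p3 = 0)"
  proof
    assume h: "p1*p2 = 0 \<and> p1*p3 = 0 \<and> p2*p3 = 0"
    have "p1 = 1 \<or> p2 = 1 \<or> p3 = 1" using h psum by auto
    then obtain c where "measure M {w \<in> space M. X w = c} = 1"
      unfolding p1_def p2_def p3_def A1_def A2_def A3_def by blast
    hence "AE w in M. X w = c" by (rule prob1_AE[OF P mX])
    thus False using L2X unfolding L2_def by blast
  qed
  define a0 where "a0 = p1 - p1*p1"
  define a1 where "a1 = -(2*p1*p2)"
  define a2 where "a2 = p2 - p2*p2"
  define b0 where "b0 = q1 - q1*q1"
  define b1 where "b1 = -(2*q1*q2)"
  define b2 where "b2 = q2 - q2*q2"
  define c0 where "c0 = measure M (A1 \<inter> B1) - p1*q1"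
  define c1 where "c1 = (measure M (A1 \<inter> B2) - p1*q2) + (measure M (A2 \<inter> B1) - p2*q1)"
  define c2 where "c2 = measure M (A2 \<inter> B2) - p2*q2"
  have IA: "A1 \<inter> A1 = A1" "A1 \<inter> A2 = {}" "A2 \<inter> A1 = {}" "A2 \<inter> A2 = A2"
    unfolding A1_def A2_def using assms(4) by auto
  have IB: "B1 \<inter> B1 = B1" "B1 \<inter> B2 = {}" "B2 \<inter> B1 = {}" "B2 \<inter> B2 = B2"
    unfolding B1_def B2_def using assms(4) by auto
  have p3e: "p3 = 1 - p1 - p2" and q3e: "q3 = 1 - q1 - q2" using psum qsum by simp_all
  have ppos: "p1*p2 \<ge> 0" "p1*p3 \<ge> 0" "p2*p3 \<ge> 0" using pnn by simp_all
  have key: "(c0+c1*t+c2*t^2)^2 = r^2 * (a0+a1*t+a2*t^2) * (b0+b1*t+b2*t^2)"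
    if t: "t \<in> {-2,-1,2,3,4}" for t :: real
  proof -
    have t0: "t \<noteq> 0" and t1: "t \<noteq> 1" using t by auto
    have sq1: "(1-t)^2 > 0" and sq2: "t^2 > 0" using t0 t1 by simp_all
    define g where "g = (\<lambda>x::real. indicator {x1} x + t * indicator {x2} x :: real)"
    have gm: "g \<in> borel_measurable borel" unfolding g_def by measurable
    have gX: "(g \<circ> X) w = 1 * indicator A1 w + t * indicator A2 w" if "w \<in> space M" for w
      using that by (simp add: g_def A1_def A2_def indicator_def)
    have gY: "(g \<circ> Y) w = 1 * indicator B1 w + t * indicator B2 w" if "w \<in> space M" for w
      using that by (simp add: g_def B1_def B2_def indicator_def)
    have mgX: "g \<circ> X \<in> borel_measurable M" using gm mX by (simp add: measurable_comp)
    have mgY: "g \<circ> Y \<in> borel_measurable M" using gm mY by (simp add: measurable_comp)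
    have VX: "cov M (g \<circ> X) (g \<circ> X) = a0 + a1*t + a2*t^2"
    proof -
      have "cov M (g \<circ> X) (g \<circ> X) = 1*1*(measure M (A1\<inter>A1) - p1*p1) + 1*t*(measure M (A1\<inter>A2) - p1*p2)
         + t*1*(measure M (A2\<inter>A1) - p2*p1) + t*t*(measure M (A2\<inter>A2) - p2*p2)"
        unfolding p1_def p2_def by (rule cov2[OF P sA(1,2) sA(1,2) mgX mgX gX gX])
      also have "\<dots> = a0 + a1*t + a2*t^2" unfolding IA a0_def a1_def a2_def p1_def p2_def
        by (simp add: power2_eq_square algebra_simps)
      finally show ?thesis .
    qed
    have VY: "cov M (g \<circ> Y) (g \<circ> Y) = b0 + b1*t + b2*t^2"
    proof -
      have "cov M (g \<circ> Y) (g \<circ> Y) = 1*1*(measure M (B1\<inter>B1) - q1*q1) + 1*t*(measure M (B1\<inter>B2) - q1*q2)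
         + t*1*(measure M (B2\<inter>B1) - q2*q1) + t*t*(measure M (B2\<inter>B2) - q2*q2)"
        unfolding q1_def q2_def by (rule cov2[OF P sB(1,2) sB(1,2) mgY mgY gY gY])
      also have "\<dots> = b0 + b1*t + b2*t^2" unfolding IB b0_def b1_def b2_def q1_def q2_def
        by (simp add: power2_eq_square algebra_simps)
      finally show ?thesis .
    qed
    have CXY: "cov M (g \<circ> X) (g \<circ> Y) = c0 + c1*t + c2*t^2"
    proof -
      have "cov M (g \<circ> X) (g \<circ> Y) = 1*1*(measure M (A1\<inter>B1) - p1*q1) + 1*t*(measure M (A1\<inter>B2) - p1*q2)
         + t*1*(measure M (A2\<inter>B1) - p2*q1) + t*t*(measure M (A2\<inter>B2) - p2*q2)"
        unfolding p1_def p2_def q1_def q2_def by (rule cov2[OF P sA(1,2) sB(1,2) mgX mgY gX gY])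
      also have "\<dots> = c0 + c1*t + c2*t^2" unfolding c0_def c1_def c2_def
        by (simp add: power2_eq_square algebra_simps)
      finally show ?thesis .
    qed
    have aform: "a0 + a1*t + a2*t^2 = p1*p2*(1-t)^2 + p1*p3 + p2*p3*t^2"
      unfolding a0_def a1_def a2_def p3e by algebra
    have bform: "b0 + b1*t + b2*t^2 = q1*q2*(1-t)^2 + q1*q3 + q2*q3*t^2"
      unfolding b0_def b1_def b2_def q3e by algebra
    have VXpos: "a0 + a1*t + a2*t^2 > 0"
    proof -
      have u1: "p1*p2*(1-t)^2 \<ge> 0" "p1*p3 \<ge> 0" "p2*p3*t^2 \<ge> 0" using ppos by simp_all
      have "p1*p2 > 0 \<or> p1*p3 > 0 \<or> p2*p3 > 0" using nd ppos by linarith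
      moreover have "p1*p2 > 0 \<Longrightarrow> p1*p2*(1-t)^2 > 0" using sq1 by simp
      moreover have "p2*p3 > 0 \<Longrightarrow> p2*p3*t^2 > 0" using sq2 by simp
      ultimately show ?thesis unfolding aform using u1 by linarith
    qed
    have VYpos: "b0 + b1*t + b2*t^2 > 0"
    proof -
      have u1: "q1*q2*(1-t)^2 \<ge> 0" "q1*q3 > 0" "q2*q3*t^2 \<ge> 0" using qpos by simp_all
      thus ?thesis unfolding bform by linarith
    qed
    have bX: "\<bar>(g \<circ> X) w\<bar> \<le> 1 + \<bar>t\<bar>" if "w \<in> space M" for w
      using gX[OF that] by (auto simp: indicator_def)
    have bY: "\<bar>(g \<circ> Y) w\<bar> \<le> 1 + \<bar>t\<bar>" if "w \<in> space M" for w
      using gY[OF that] by (auto simp: indicator_def)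
    have L2gX: "L2 M (g \<circ> X)" by (rule L2_bounded[OF P mgX bX]) (assumption, subst VX, rule VXpos)
    have L2gY: "L2 M (g \<circ> Y)" by (rule L2_bounded[OF P mgY bY]) (assumption, subst VY, rule VYpos)
    have "corr M (g \<circ> X) (g \<circ> Y) = r" by (rule G[OF gm L2gX L2gY])
    hence ce: "(c0 + c1*t + c2*t^2) / sqrt ((a0 + a1*t + a2*t^2) * (b0 + b1*t + b2*t^2)) = r"
      unfolding corr_def VX VY CXY .
    have sp: "sqrt ((a0 + a1*t + a2*t^2) * (b0 + b1*t + b2*t^2)) > 0" using VXpos VYpos by simp
    have "c0 + c1*t + c2*t^2 = r * sqrt ((a0 + a1*t + a2*t^2) * (b0 + b1*t + b2*t^2))"
      using ce sp by (simp add: field_simps)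
    hence "(c0 + c1*t + c2*t^2)^2 = r^2 * (sqrt ((a0 + a1*t + a2*t^2) * (b0 + b1*t + b2*t^2)))^2"
      by (simp add: power_mult_distrib)
    also have "(sqrt ((a0 + a1*t + a2*t^2) * (b0 + b1*t + b2*t^2)))^2 = (a0 + a1*t + a2*t^2) * (b0 + b1*t + b2*t^2)"
      using VXpos VYpos by simp
    finally show ?thesis by simp
  qed
  have k: "r^2 > 0" using r by simp
  have b2pos: "b2 > 0"
  proof -
    have "b2 = q2 * (q1 + q3)" unfolding b2_def q3e by algebra
    thus ?thesis using qpos by simp
  qed
  have disc: "b1^2 < 4*b0*b2"
  proof -
    have "4*b0*b2 - b1^2 = 4*(q1*q2*q3)" unfolding b0_def b1_def b2_def q3e by algebra
    moreover have "q1*q2*q3 > 0" using qpos by simp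
    ultimately show ?thesis by linarith
  qed
  obtain l where l: "a0 = l*b0" "a1 = l*b1" "a2 = l*b2"
    using core_alg[OF k b2pos disc key] by blast
  have h12: "p1*p2 = l*(q1*q2)" using l(2) unfolding a1_def b1_def by simp
  have h13: "p1*p3 = l*(q1*q3)"
  proof -
    have "p1*p3 = a0 - p1*p2" unfolding a0_def p3e by algebra
    also have "\<dots> = l*(q1*q3)" unfolding l(1) h12 b0_def q3e by algebra
    finally show ?thesis .
  qed
  have h23: "p2*p3 = l*(q2*q3)"
  proof -
    have "p2*p3 = a2 - p1*p2" unfolding a2_def p3e by algebra
    also have "\<dots> = l*(q2*q3)" unfolding l(3) h12 b2_def q3e by algebra
    finally show ?thesis .
  qed
  have pq: "p1 = q1 \<and> p2 = q2 \<and> p3 = q3"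
    by (rule pq_alg[OF pnn qpos psum qsum nd h12 h13 h23])
  have eqS: "measure M {w \<in> space M. X w = x} = measure M {w \<in> space M. Y w = x}" if "x \<in> S" for x
    using that pq unfolding S_def p1_def p2_def p3_def q1_def q2_def q3_def A1_def A2_def A3_def
      B1_def B2_def B3_def by auto
  show "distr M borel X = distr M borel Y"
  proof (rule measure_eqI)
    show "sets (distr M borel X) = sets (distr M borel Y)" by simp
    fix A assume "A \<in> sets (distr M borel X)"
    hence A: "A \<in> sets borel" by simp
    show "emeasure (distr M borel X) A = emeasure (distr M borel Y) A"
      unfolding distr_fin[OF P mX finS AEX A] distr_fin[OF P mY finS AEY A]
      by (rule sum.cong) (use eqS in auto)
  qed
qed
end
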